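(* Let $x,y>0$ with $x\ne y$, and define for $t\in(-\min\{x,y\},\infty)$ \[ H_{x,y}(t)=H(x+t,y+t)=\frac{2}{\frac{1}{x+t}+\frac{1}{y+t}}. \] Then $H_{x,y}(t)$ is a Bernstein function of $t$ on $(-\min\{x,y\},\infty)$ and has the integral representation \[ H_{x,y}(t)=H(x,y)+t+\frac{(x-y)^2}{4}\int_0^\infty\bigl(1-e^{-tu}\bigr)e^{-(x+y)u/2}\,\mathrm{d}u . \] Consequently, \[ H(x,y)=A(x,y)-\frac{(x-y)^2}{2}\int_0^\infty e^{-(x+y)u}\,\mathrm{d}u \] and, for $y>0$ and $s>0$, \[ H(s,y+s)=s+\frac{y^2}{4}\int_0^\infty\bigl(1-e^{-su}\bigr)e^{-yu/2}\,\mathrm{d}u . \]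
   Context: For positive numbers $a,b$, the harmonic mean is $H(a,b)=\frac{2}{\frac1a+\frac1b}$ and the arithmetic mean is $A(a,b)=\frac{a+b}{2}$. A function $f$ on an interval $I\subseteq\mathbb{R}$ is completely monotonic on $I$ if it has derivatives of all orders on $I$ and $(-1)^n f^{(n)}(t)\ge 0$ for all $t\in I$ and all integers $n\ge0$. A function $f:I\to[0,\infty)$ is a Bernstein function on $I$ if it has derivatives of all orders and $f'$ is completely monotonic on $I$. *)

theory Defs
  imports "HOL-Analysis.Analysis"
begin

definition harmonic_mean :: "real \<Rightarrow> real \<Rightarrow> real" where
  "harmonic_mean a b = 2 / (1 / a + 1 / b)"

definition arith_mean :: "real \<Rightarrow> real \<Rightarrow> real" where
  "arith_mean a b = (a + b) / 2"

definition smooth_on :: "real set \<Rightarrow> (real \<Rightarrow> real) \<Rightarrow> bool" where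
  "smooth_on I f \<longleftrightarrow> (\<forall>n. \<forall>t\<in>I. ((deriv ^^ n) f) differentiable (at t))"

definition completely_monotonic_on :: "real set \<Rightarrow> (real \<Rightarrow> real) \<Rightarrow> bool" where
  "completely_monotonic_on I f \<longleftrightarrow>
     smooth_on I f \<and> (\<forall>n. \<forall>t\<in>I. (-1) ^ n * (deriv ^^ n) f t \<ge> 0)"

definition bernstein_on :: "real set \<Rightarrow> (real \<Rightarrow> real) \<Rightarrow> bool" where
  "bernstein_on I f \<longleftrightarrow>
     (\<forall>t\<in>I. f t \<ge> 0) \<and> smooth_on I f \<and> completely_monotonic_on I (deriv f)"

end

theory Submission
  imports Defs
begin

lemma dpow: assumes "c + t > (0::real)"
  shows "((\<lambda>t. K / (c+t)^(n+1)) has_real_derivative (- K * real (n+1) / (c+t)^(n+2))) (at t)"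
proof -
  have d: "((\<lambda>t. (c+t)^(n+1)) has_real_derivative real (n+1) * (c+t)^n) (at t)"
    using DERIV_power[OF DERIV_add[OF DERIV_const DERIV_ident, of c t], of "n+1"] by simp
  have "((\<lambda>t. K / (c+t)^(n+1)) has_real_derivative (0 * (c+t)^(n+1) - K * (real (n+1) * (c+t)^n)) / ((c+t)^(n+1) * (c+t)^(n+1))) (at t)"
    by (rule DERIV_divide[OF DERIV_const d]) (use assms in auto)
  moreover have "(c+t)^(n+1) * (c+t)^(n+1) = (c+t)^n * (c+t)^(n+2)"
    by (simp add: power_add[symmetric])
  moreover have "(c+t)^n > 0" using assms by simp
  ultimately show ?thesis using assms by simp
qed

definition gg :: "real \<Rightarrow> real \<Rightarrow> nat \<Rightarrow> real \<Rightarrow> real" where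
  "gg c D n t = (if n = 0 then c + t else 0) + (if n = 1 then 1 else 0) + D * (-1)^(n+1) * fact n / (c+t)^(n+1)"

lemma gg_deriv: assumes "c + t > 0"
  shows "(gg c D n has_real_derivative gg c D (Suc n) t) (at t)"
proof -
  have "((\<lambda>t. D * (-1)^(n+1) * fact n / (c+t)^(n+1)) has_real_derivative
     (- (D * (-1)^(n+1) * fact n) * real (n+1) / (c+t)^(n+2))) (at t)"
    by (rule dpow[OF assms])
  moreover have "(- (D * (-1)^(n+1) * fact n) * real (n+1) / (c+t)^(n+2)) = D * (-1)^(Suc n+1) * fact (Suc n) / (c+t)^(Suc n+1)"
    by (simp add: algebra_simps)
  ultimately have h: "((\<lambda>t. D * (-1)^(n+1) * fact n / (c+t)^(n+1)) has_real_derivative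
     D * (-1)^(Suc n+1) * fact (Suc n) / (c+t)^(Suc n+1)) (at t)" by (rule DERIV_cong)
  have e: "gg c D n = (\<lambda>t. (if n = 0 then c + t else 0) + (if n = 1 then 1 else 0) + D * (-1)^(n+1) * fact n / (c+t)^(n+1))"
    by (auto simp: gg_def fun_eq_iff)
  have a: "((\<lambda>t. (if n = 0 then c + t else 0) + (if n = 1 then 1 else 0)) has_real_derivative (if n = 0 then 1 else 0)) (at t)"
    by (cases "n=0") (auto intro!: derivative_eq_intros)
  show ?thesis unfolding e
    by (rule DERIV_cong[OF DERIV_add[OF a h]]) (simp add: gg_def)
qed

lemma exp_int: assumes "a > (0::real)" shows "((\<lambda>u. exp (- a * u)) has_integral 1/a) {0..}"
  using has_integral_exp_minus_to_infinity[OF assms, of 0] by simp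


lemma int1: assumes "b > (0::real)" "b/2 + t > 0"
  shows "((\<lambda>u. (1 - exp (- t * u)) * exp (- b * u / 2)) has_integral (2/b - 1/(b/2+t))) {0..}"
proof -
  have i1: "((\<lambda>u. exp (- (b/2) * u)) has_integral 1/(b/2)) {0..}" by (rule exp_int) (use assms in simp)
  have i2: "((\<lambda>u. exp (- (b/2+t) * u)) has_integral 1/(b/2+t)) {0..}" by (rule exp_int) (use assms in simp)
  have e: "(\<lambda>u. (1 - exp (- t * u)) * exp (- b * u / 2)) = (\<lambda>u. exp (- (b/2) * u) - exp (- (b/2+t) * u))"
    by (auto simp: fun_eq_iff algebra_simps simp flip: exp_add)
  show ?thesis unfolding e using has_integral_diff[OF i1 i2] by simp
qed

lemma higher_eq: "(deriv ^^ n) (deriv f) = (deriv ^^ Suc n) f"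
  by (simp add: funpow_Suc_right del: funpow.simps)

lemma gg_higher:
  assumes "c + t > (0::real)"
  shows "(deriv ^^ n) (gg c D 0) t = gg c D n t"
  using assms
proof (induction n arbitrary: t)
  case 0 then show ?case by simp
next
  case (Suc n)
  have ev: "eventually (\<lambda>z. (deriv ^^ n) (gg c D 0) z = gg c D n z) (nhds t)"
  proof -
    have "open {z. c + z > (0::real)}" by (intro open_Collect_less continuous_intros)
    hence "eventually (\<lambda>z. z \<in> {z. c + z > 0}) (nhds t)"
      using Suc.prems by (intro eventually_nhds_in_open) auto
    thus ?thesis by eventually_elim (use Suc.IH in auto)
  qed
  have "(deriv ^^ Suc n) (gg c D 0) t = deriv ((deriv ^^ n) (gg c D 0)) t" by simp
  also have "\<dots> = deriv (gg c D n) t" by (rule deriv_cong_ev[OF ev refl])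
  also have "\<dots> = gg c D (Suc n) t" by (rule DERIV_imp_deriv[OF gg_deriv[OF Suc.prems]])
  finally show ?case .
qed

lemma sign_ok: assumes "c + t > (0::real)" "D \<ge> 0"
  shows "(-1)^n * gg c D (Suc n) t \<ge> 0"
proof -
  have p: "(-1::real)^n * (-1)^(Suc n+1) = 1"
    by (simp flip: power_add)
  have q: "(-1)^n * gg c D (Suc n) t = (-1)^n * (if n = 0 then 1 else 0) + D * fact (Suc n) / (c+t)^(Suc n+1)"
    unfolding gg_def using p by (simp add: algebra_simps)
  show ?thesis unfolding q using assms by (cases "n = 0") auto
qed

theorem theorem3p1:
  fixes x y :: real
  assumes "x > 0" and "y > 0" and "x \<noteq> y"
  shows "bernstein_on {- min x y<..} (\<lambda>t. harmonic_mean (x + t) (y + t))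
    \<and> (\<forall>t > - min x y.
          (\<lambda>u. (1 - exp (- t * u)) * exp (- (x + y) * u / 2)) integrable_on {0..}
        \<and> harmonic_mean (x + t) (y + t) = harmonic_mean x y + t
            + (x - y)^2 / 4 * integral {0..} (\<lambda>u. (1 - exp (- t * u)) * exp (- (x + y) * u / 2)))
    \<and> (\<lambda>u. exp (- (x + y) * u)) integrable_on {0..}
    \<and> harmonic_mean x y = arith_mean x y - (x - y)^2 / 2 * integral {0..} (\<lambda>u. exp (- (x + y) * u))
    \<and> (\<forall>s > 0. \<forall>y' > 0.
          (\<lambda>u. (1 - exp (- s * u)) * exp (- y' * u / 2)) integrable_on {0..}
        \<and> harmonic_mean s (y' + s) = s
            + y'^2 / 4 * integral {0..} (\<lambda>u. (1 - exp (- s * u)) * exp (- y' * u / 2)))"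
proof -
  define c where "c = (x + y) / 2"
  define D where "D = (x - y)^2 / 4"
  define I where "I = {- min x y<..}"
  define f where "f = (\<lambda>t. harmonic_mean (x + t) (y + t))"
  have D0: "D \<ge> 0" unfolding D_def by simp
  have Ipos: "x + t > 0 \<and> y + t > 0 \<and> c + t > 0" if "t \<in> I" for t
    using that assms unfolding I_def c_def by (auto simp: min_def field_simps split: if_splits)
  have oI: "open I" unfolding I_def by simp
  have fF: "f t = gg c D 0 t" if "t \<in> I" for t
    using Ipos[OF that] unfolding f_def gg_def harmonic_mean_def c_def D_def
    by (simp add: field_simps) (simp add: power2_eq_square algebra_simps)
  have hd: "(deriv ^^ n) f t = gg c D n t" if "t \<in> I" for t n
  proof -
    have "eventually (\<lambda>z. z \<in> I) (nhds t)" using oI that by (intro eventually_nhds_in_open)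
    hence "eventually (\<lambda>z. f z = gg c D 0 z) (nhds t)" by eventually_elim (use fF in auto)
    hence "(deriv ^^ n) f t = (deriv ^^ n) (gg c D 0) t" by (rule higher_deriv_cong_ev) simp
    also have "\<dots> = gg c D n t" using gg_higher Ipos[OF that] by blast
    finally show ?thesis .
  qed
  have sm: "smooth_on I f" unfolding smooth_on_def
  proof (intro allI ballI)
    fix n t assume t: "t \<in> I"
    have "(gg c D n has_real_derivative gg c D (Suc n) t) (at t)" using gg_deriv Ipos[OF t] by blast
    hence "((deriv ^^ n) f has_real_derivative gg c D (Suc n) t) (at t)"
      by (rule has_field_derivative_transform_within_open[OF _ oI t]) (use hd in auto)
    thus "(deriv ^^ n) f differentiable at t"
      by (metis has_field_derivative_imp_has_derivative differentiableI)
  qed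
  have bern: "bernstein_on I f"
    unfolding bernstein_on_def completely_monotonic_on_def
  proof (intro conjI ballI allI)
    fix t assume "t \<in> I"
    then have "x + t > 0" "y + t > 0" using Ipos by auto
    thus "f t \<ge> 0" unfolding f_def harmonic_mean_def by (auto intro!: divide_nonneg_pos add_pos_pos)
  next
    show "smooth_on I f" by (rule sm)
  next
    show "smooth_on I (deriv f)" using sm unfolding smooth_on_def higher_eq by blast
  next
    fix n t assume t: "t \<in> I"
    show "(-1)^n * (deriv ^^ n) (deriv f) t \<ge> 0"
      unfolding higher_eq hd[OF t] by (rule sign_ok[OF _ D0]) (use Ipos[OF t] in simp)
  qed
  have part2: "(\<lambda>u. (1 - exp (- t * u)) * exp (- (x + y) * u / 2)) integrable_on {0..}
        \<and> harmonic_mean (x + t) (y + t) = harmonic_mean x y + t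
            + (x - y)^2 / 4 * integral {0..} (\<lambda>u. (1 - exp (- t * u)) * exp (- (x + y) * u / 2))"
    if t: "t > - min x y" for t
  proof -
    have tI: "t \<in> I" using t unfolding I_def by simp
    note p = Ipos[OF tI]
    have i: "((\<lambda>u. (1 - exp (- t * u)) * exp (- (x + y) * u / 2)) has_integral (2/(x+y) - 1/((x+y)/2+t))) {0..}"
      by (rule int1) (use t assms in \<open>auto simp: min_def field_simps split: if_splits\<close>)
    have "harmonic_mean (x + t) (y + t) = harmonic_mean x y + t + (x - y)^2 / 4 * (2/(x+y) - 1/((x+y)/2+t))"
    proof -
      have a: "x + t > 0" "y + t > 0" "x + y > 0" "x + y + 2 * t > 0" using p assms unfolding c_def by auto
      have h1: "harmonic_mean (x + t) (y + t) = 2*(x+t)*(y+t)/(x+y+2*t)"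
        using a unfolding harmonic_mean_def by (simp add: field_simps)
      have h2: "harmonic_mean x y = 2*x*y/(x+y)"
        using assms unfolding harmonic_mean_def by (simp add: field_simps)
      have h3: "1/((x+y)/2+t) = 2/(x+y+2*t)" by (simp add: field_simps)
      show ?thesis unfolding h1 h2 h3 using a
        by (simp add: divide_simps) (simp add: power2_eq_square algebra_simps)
    qed
    then show ?thesis using i by (auto simp: integrable_on_def integral_unique)
  qed
  have i3: "((\<lambda>u. exp (- (x + y) * u)) has_integral 1/(x+y)) {0..}" by (rule exp_int) (use assms in simp)
  have part3: "harmonic_mean x y = arith_mean x y - (x - y)^2 / 2 * (1/(x+y))"
    using assms unfolding harmonic_mean_def arith_mean_def
    by (simp add: divide_simps) (simp add: power2_eq_square algebra_simps)
  have part4: "(\<lambda>u. (1 - exp (- s * u)) * exp (- y' * u / 2)) integrable_on {0..}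
        \<and> harmonic_mean s (y' + s) = s
            + y'^2 / 4 * integral {0..} (\<lambda>u. (1 - exp (- s * u)) * exp (- y' * u / 2))"
    if "s > 0" "y' > 0" for s y' :: real
  proof -
    have i: "((\<lambda>u. (1 - exp (- s * u)) * exp (- y' * u / 2)) has_integral (2/y' - 1/(y'/2+s))) {0..}"
      by (rule int1) (use that in auto)
    have "harmonic_mean s (y' + s) = s + y'^2 / 4 * (2/y' - 1/(y'/2+s))"
      using that unfolding harmonic_mean_def
      by (simp add: divide_simps) (simp add: power2_eq_square algebra_simps)
    then show ?thesis using i by (auto simp: integrable_on_def integral_unique)
  qed
  show ?thesis
    using bern part2 part4 i3 part3 unfolding I_def f_def
    by (auto simp: integrable_on_def integral_unique)
qed

end
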